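(* Let $E_1,H_1,\dots,E_n,H_n$ be logically independent events, $\mathcal F_k=\{E_1|H_1,\dots,E_k|H_k\}$, and $(p_1,\dots,p_n)\in[0,1]^n$ an assessment on $\mathcal F_n$. For each $k=2,\dots,n$, the set of coherent extensions of $(p_1,\dots,p_k)$ to the quasi disjunction $\mathcal D(\mathcal F_k)=\big(\bigvee_{i=1}^kE_iH_i\big)\,|\,\big(\bigvee_{i=1}^kH_i\big)$ is the interval $[l_k,u_k]$ with $l_k=T_0^H(p_1,\dots,p_k)$ and $u_k=S_L(p_1,\dots,p_k)=\min(p_1+\dots+p_k,1)$. *)

theory Defs
  imports Main "HOL.Real"
begin

definition logically_independent :: "('i \<Rightarrow> 'a set) \<Rightarrow> 'i set \<Rightarrow> bool" where
  "logically_independent F I \<longleftrightarrow>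
     (\<forall>S \<subseteq> I. \<exists>\<omega>. \<forall>i\<in>I. (\<omega> \<in> F i \<longleftrightarrow> i \<in> S))"

(* Coherence (de Finetti / Gilio betting scheme) of an assessment p on the family of
   conditional events E j | H j, j \<in> I: for every nonempty finite subfamily J and
   every choice of stakes s, the random gain
     G = sum_{j in J} s_j * I_{H_j} * (I_{E_j} - p_j)
   restricted to the disjunction of the conditioning events of J has
   nonnegative maximum (i.e. takes some nonnegative value there; G takes only
   finitely many values). *)
definition coherent :: "('i \<Rightarrow> 'a set) \<Rightarrow> ('i \<Rightarrow> 'a set) \<Rightarrow> ('i \<Rightarrow> real) \<Rightarrow> 'i set \<Rightarrow> bool" where
  "coherent E H p I \<longleftrightarrow>
     (\<forall>J \<subseteq> I. J \<noteq> {} \<longrightarrow> finite J \<longrightarrow>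
        (\<forall>s :: 'i \<Rightarrow> real. \<exists>\<omega> \<in> (\<Union>j\<in>J. H j).
           (\<Sum>j\<in>J. s j * of_bool (\<omega> \<in> H j) * (of_bool (\<omega> \<in> E j) - p j)) \<ge> 0))"

definition hamacher0 :: "real \<Rightarrow> real \<Rightarrow> real" where
  "hamacher0 x y = (if x = 0 \<and> y = 0 then 0 else x * y / (x + y - x * y))"

definition T0H :: "real list \<Rightarrow> real" where
  "T0H xs = foldl hamacher0 1 xs"

(* Family F_k \<union> {D(F_k)}: index 0 is the quasi disjunction
   (\<Or>_{i=1..k} E_i H_i) | (\<Or>_{i=1..k} H_i), indices 1..k are E_i | H_i. *)
definition qdE :: "(nat \<Rightarrow> 'a set) \<Rightarrow> (nat \<Rightarrow> 'a set) \<Rightarrow> nat \<Rightarrow> nat \<Rightarrow> 'a set" where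
  "qdE E H k j = (if j = 0 then (\<Union>i\<in>{1..k}. E i \<inter> H i) else E j)"

definition qdH :: "(nat \<Rightarrow> 'a set) \<Rightarrow> nat \<Rightarrow> nat \<Rightarrow> 'a set" where
  "qdH H k j = (if j = 0 then (\<Union>i\<in>{1..k}. H i) else H j)"

definition qdP :: "(nat \<Rightarrow> real) \<Rightarrow> real \<Rightarrow> nat \<Rightarrow> real" where
  "qdP p z j = (if j = 0 then z else p j)"

end

theory Submission
  imports Defs
begin


lemma ham_zero_left[simp]: "hamacher0 0 x = 0" by (simp add: hamacher0_def)
lemma ham_zero_right[simp]: "hamacher0 x 0 = 0" by (simp add: hamacher0_def)

lemma foldl_ham_zero: "foldl hamacher0 0 xs = 0"
  by (induction xs) auto

lemma foldl_ham_mem0: "0 \<in> set xs \<Longrightarrow> foldl hamacher0 a xs = 0"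
proof (induction xs arbitrary: a)
  case Nil then show ?case by simp
next
  case (Cons x xs)
  show ?case
  proof (cases "x = 0")
    case True then show ?thesis by (simp add: foldl_ham_zero)
  next
    case False then show ?thesis using Cons by simp
  qed
qed

lemma foldl_ham_pos:
  "\<forall>x\<in>set xs. 0 < x \<and> x \<le> 1 \<Longrightarrow> 0 < a \<Longrightarrow>
   0 < foldl hamacher0 a xs \<and> 1 / foldl hamacher0 a xs = 1 / a + sum_list (map (\<lambda>x. 1 / x - 1) xs)"
proof (induction xs arbitrary: a)
  case Nil then show ?case by simp
next
  case (Cons x xs)
  have x: "0 < x" "x \<le> 1" using Cons.prems by auto
  have den: "0 < a + x - a * x"
  proof -
    have "0 \<le> a * (1 - x)" using x Cons.prems(2) by simp
    then show ?thesis using x by (simp add: algebra_simps)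
  qed
  have h: "hamacher0 a x = a * x / (a + x - a * x)" using x by (simp add: hamacher0_def)
  have hpos: "0 < hamacher0 a x" using h den x Cons.prems(2) by simp
  have hinv: "1 / hamacher0 a x = 1 / a + (1 / x - 1)"
    unfolding h using den x Cons.prems(2) by (simp add: field_simps)
  have IH: "0 < foldl hamacher0 (hamacher0 a x) xs \<and> 1 / foldl hamacher0 (hamacher0 a x) xs = 1 / hamacher0 a x + sum_list (map (\<lambda>x. 1 / x - 1) xs)"
    using Cons.IH[OF _ hpos] Cons.prems(1) by simp
  then show ?case using hinv by simp
qed

lemma T0H_zero:
  assumes "i \<in> {1..k}" "p i = 0"
  shows "T0H (map p [1..<k+1]) = 0"
proof -
  have "0 \<in> p ` {1..<k+1}" using assms by (metis atLeastLessThanSuc_atLeastAtMost Suc_eq_plus1 image_eqI)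
  then show ?thesis unfolding T0H_def by (intro foldl_ham_mem0) (simp only: set_map set_upt)
qed

lemma T0H_pos:
  assumes "\<forall>i\<in>{1..k}. 0 < p i \<and> p i \<le> 1"
  shows "0 < T0H (map p [1..<k+1]) \<and> T0H (map p [1..<k+1]) = 1 / (1 + (\<Sum>i=1..k. 1 / p i - 1))"
proof -
  have "0 < foldl hamacher0 1 (map p [1..<k+1]) \<and> 1 / foldl hamacher0 1 (map p [1..<k+1]) = 1 / 1 + sum_list (map (\<lambda>x. 1 / x - 1) (map p [1..<k+1]))"
    using assms by (intro foldl_ham_pos) auto
  moreover have "sum_list (map (\<lambda>x. 1 / x - 1) (map p [1..<k+1])) = (\<Sum>i=1..k. 1 / p i - 1)"
  proof -
    have e: "{1..<k+1} = {1..k}" by auto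
    have "sum_list (map (\<lambda>x. 1 / x - 1) (map p [1..<k+1])) = sum_list (map (\<lambda>i. 1 / p i - 1) [1..<k+1])"
      by (simp add: comp_def)
    also have "\<dots> = (\<Sum>i\<in>set [1..<k+1]. 1 / p i - 1)" by (rule sum_set_upt_conv_sum_list_nat[symmetric])
    finally show ?thesis by (simp only: set_upt e)
  qed
  ultimately show ?thesis unfolding T0H_def
    by (metis div_by_1 divide_divide_eq_right mult_1)
qed

lemma T0H_nonneg:
  assumes "\<forall>i\<in>{1..k}. 0 \<le> p i \<and> p i \<le> 1"
  shows "0 \<le> T0H (map p [1..<k+1])"
proof (cases "\<exists>i\<in>{1..k}. p i = 0")
  case True then show ?thesis using T0H_zero by fastforce
next
  case False
  then have "\<forall>i\<in>{1..k}. 0 < p i \<and> p i \<le> 1" using assms by force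
  then show ?thesis using T0H_pos by fastforce
qed

lemma atom:
  fixes E H :: "nat \<Rightarrow> 'a set" and n k :: nat
  assumes LI: "logically_independent (\<lambda>(i, b). if b then E i else H i) ({1..n} \<times> UNIV)"
    and kn: "k \<le> n"
  shows "\<exists>\<omega>. \<forall>i\<in>{1..k}. (\<omega> \<in> E i \<longleftrightarrow> i \<in> A) \<and> (\<omega> \<in> H i \<longleftrightarrow> i \<in> B)"
proof -
  let ?S = "{(i,b). i\<in>{1..n} \<and> (if b then i\<in>A else i\<in>B)}"
  have "?S \<subseteq> {1..n} \<times> UNIV" by auto
  then obtain \<omega> where w: "\<forall>x\<in>{1..n} \<times> UNIV. (\<omega> \<in> (case x of (i,b) \<Rightarrow> if b then E i else H i)) \<longleftrightarrow> x \<in> ?S"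
    using LI unfolding logically_independent_def by blast
  show ?thesis
  proof (intro exI ballI conjI)
    fix i assume i: "i\<in>{1..k}"
    have "i \<in> {1..n}" using i kn by auto
    show "\<omega> \<in> E i \<longleftrightarrow> i \<in> A" using w[rule_format, of "(i,True)"] \<open>i \<in> {1..n}\<close> by auto
    show "\<omega> \<in> H i \<longleftrightarrow> i \<in> B" using w[rule_format, of "(i,False)"] \<open>i \<in> {1..n}\<close> by auto
  qed
qed

lemma G_split:
  "(\<Sum>j\<in>{0..k}. s j * of_bool (\<omega> \<in> qdH H k j) * (of_bool (\<omega> \<in> qdE E H k j) - qdP p z j))
   = s 0 * of_bool (\<omega> \<in> (\<Union>i\<in>{1..k}. H i)) * (of_bool (\<omega> \<in> (\<Union>i\<in>{1..k}. E i \<inter> H i)) - z)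
     + (\<Sum>j=1..k. s j * of_bool (\<omega> \<in> H j) * (of_bool (\<omega> \<in> E j) - p j))"
proof -
  have "{0..k} = insert 0 {1..k}" by auto
  then have "(\<Sum>j\<in>{0..k}. s j * of_bool (\<omega> \<in> qdH H k j) * (of_bool (\<omega> \<in> qdE E H k j) - qdP p z j))
    = s 0 * of_bool (\<omega> \<in> qdH H k 0) * (of_bool (\<omega> \<in> qdE E H k 0) - qdP p z 0)
      + (\<Sum>j\<in>{1..k}. s j * of_bool (\<omega> \<in> qdH H k j) * (of_bool (\<omega> \<in> qdE E H k j) - qdP p z j))"
    by (simp add: sum.insert)
  also have "(\<Sum>j\<in>{1..k}. s j * of_bool (\<omega> \<in> qdH H k j) * (of_bool (\<omega> \<in> qdE E H k j) - qdP p z j))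
    = (\<Sum>j=1..k. s j * of_bool (\<omega> \<in> H j) * (of_bool (\<omega> \<in> E j) - p j))"
    by (rule sum.cong) (auto simp: qdH_def qdE_def qdP_def)
  finally show ?thesis by (simp add: qdH_def qdE_def qdP_def)
qed

lemma UH: "1 \<le> k \<Longrightarrow> (\<Union>j\<in>{0..k}. qdH H k j) = (\<Union>i\<in>{1..k}. H i)"
proof
  show "(\<Union>j\<in>{0..k}. qdH H k j) \<subseteq> (\<Union>i\<in>{1..k}. H i)"
  proof
    fix x assume "x \<in> (\<Union>j\<in>{0..k}. qdH H k j)"
    then obtain j where j: "j \<in> {0..k}" "x \<in> qdH H k j" by blast
    show "x \<in> (\<Union>i\<in>{1..k}. H i)"
    proof (cases "j = 0")
      case True then show ?thesis using j by (simp add: qdH_def)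
    next
      case False then have "j \<in> {1..k}" using j by auto
      moreover have "x \<in> H j" using j False by (simp add: qdH_def)
      ultimately show ?thesis by (rule UN_I)
    qed
  qed
  show "(\<Union>i\<in>{1..k}. H i) \<subseteq> (\<Union>j\<in>{0..k}. qdH H k j)"
  proof
    fix x assume "x \<in> (\<Union>i\<in>{1..k}. H i)"
    then have "x \<in> qdH H k 0" by (simp add: qdH_def)
    moreover have "(0::nat) \<in> {0..k}" by simp
    ultimately show "x \<in> (\<Union>j\<in>{0..k}. qdH H k j)" by (rule_tac UN_I[of 0]) auto
  qed
qed



lemma coh_full:
  fixes E H :: "nat \<Rightarrow> 'a set" and p :: "nat \<Rightarrow> real" and k :: nat
  assumes coh: "coherent (qdE E H k) (qdH H k) (qdP p z) {0..k}" and k1: "1 \<le> k"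
  shows "\<exists>\<omega>\<in>(\<Union>i\<in>{1..k}. H i). 0 \<le> s 0 * (of_bool (\<omega> \<in> (\<Union>i\<in>{1..k}. E i \<inter> H i)) - z)
     + (\<Sum>j=1..k. s j * of_bool (\<omega> \<in> H j) * (of_bool (\<omega> \<in> E j) - p j))"
proof -
  have "\<exists>\<omega>\<in>(\<Union>j\<in>{0..k}. qdH H k j). (\<Sum>j\<in>{0..k}. s j * of_bool (\<omega> \<in> qdH H k j) * (of_bool (\<omega> \<in> qdE E H k j) - qdP p z j)) \<ge> 0"
    by (rule coh[unfolded coherent_def, rule_format]) auto
  then obtain \<omega> where w0: "\<omega> \<in> (\<Union>j\<in>{0..k}. qdH H k j)"
    and w: "0 \<le> (\<Sum>j\<in>{0..k}. s j * of_bool (\<omega> \<in> qdH H k j) * (of_bool (\<omega> \<in> qdE E H k j) - qdP p z j))"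
    by blast
  have w1: "\<omega> \<in> (\<Union>i\<in>{1..k}. H i)" using w0 UH[OF k1, of H] by simp
  have e: "of_bool (\<omega> \<in> (\<Union>i\<in>{1..k}. H i)) = (1::real)" using w1 by simp
  have "0 \<le> s 0 * (of_bool (\<omega> \<in> (\<Union>i\<in>{1..k}. E i \<inter> H i)) - z)
     + (\<Sum>j=1..k. s j * of_bool (\<omega> \<in> H j) * (of_bool (\<omega> \<in> E j) - p j))"
    using w unfolding G_split e by (simp only: mult_1_right)
  then show ?thesis using w1 by blast
qed

lemma coh_full2:
  fixes E H :: "nat \<Rightarrow> 'a set" and p :: "nat \<Rightarrow> real" and k :: nat
  assumes coh: "coherent (qdE E H k) (qdH H k) (qdP p z) {0..k}" and k1: "1 \<le> k"
  shows "\<exists>\<omega>\<in>(\<Union>i\<in>{1..k}. H i). 0 \<le> c * (of_bool (\<omega> \<in> (\<Union>i\<in>{1..k}. E i \<inter> H i)) - z)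
     + (\<Sum>j=1..k. t j * of_bool (\<omega> \<in> H j) * (of_bool (\<omega> \<in> E j) - p j))"
proof -
  have eq: "\<And>\<omega>. (\<Sum>j=1..k. (if j = 0 then c else t j) * of_bool (\<omega> \<in> H j) * (of_bool (\<omega> \<in> E j) - p j))
     = (\<Sum>j=1..k. t j * of_bool (\<omega> \<in> H j) * (of_bool (\<omega> \<in> E j) - p j))"
    by (rule sum.cong) auto
  show ?thesis using coh_full[OF coh k1, of "\<lambda>j. if j = 0 then c else t j"] by (simp only: eq if_True refl)
qed

lemma coh_single:
  fixes E H :: "nat \<Rightarrow> 'a set" and p :: "nat \<Rightarrow> real" and k :: nat
  assumes coh: "coherent (qdE E H k) (qdH H k) (qdP p z) {0..k}"
  shows "\<exists>\<omega>\<in>(\<Union>i\<in>{1..k}. H i). 0 \<le> c * (of_bool (\<omega> \<in> (\<Union>i\<in>{1..k}. E i \<inter> H i)) - z)"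
proof -
  have "\<exists>\<omega>\<in>(\<Union>j\<in>{0}. qdH H k j). (\<Sum>j\<in>{0}. (\<lambda>_. c) j * of_bool (\<omega> \<in> qdH H k j) * (of_bool (\<omega> \<in> qdE E H k j) - qdP p z j)) \<ge> 0"
    by (rule coh[unfolded coherent_def, rule_format]) auto
  then show ?thesis by (simp add: qdH_def qdE_def qdP_def)
qed

lemma nec:
  fixes E H :: "nat \<Rightarrow> 'a set" and p :: "nat \<Rightarrow> real" and k :: nat
  assumes coh: "coherent (qdE E H k) (qdH H k) (qdP p z) {0..k}"
    and pb: "\<forall>i\<in>{1..k}. 0 \<le> p i \<and> p i \<le> 1" and k1: "1 \<le> k"
  shows "T0H (map p [1..<k+1]) \<le> z \<and> z \<le> min (\<Sum>i=1..k. p i) 1"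
proof -
  let ?H0 = "\<Union>i\<in>{1..k}. H i"
  let ?E0 = "\<Union>i\<in>{1..k}. E i \<inter> H i"
  have z1: "z \<le> 1"
  proof -
    obtain \<omega> where "0 \<le> 1 * (of_bool (\<omega> \<in> ?E0) - z)" using coh_single[OF coh, of 1] by blast
    then show ?thesis by (simp add: of_bool_def split: if_splits)
  qed
  have z0: "0 \<le> z"
  proof -
    obtain \<omega> where "0 \<le> (-1) * (of_bool (\<omega> \<in> ?E0) - z)" using coh_single[OF coh, of "-1"] by blast
    then show ?thesis by (simp add: of_bool_def split: if_splits)
  qed
  have zs: "z \<le> (\<Sum>i=1..k. p i)"
  proof -
    obtain \<omega> where w: "\<omega> \<in> ?H0" and G: "0 \<le> 1 * (of_bool (\<omega> \<in> ?E0) - z)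
     + (\<Sum>j=1..k. (-1) * of_bool (\<omega> \<in> H j) * (of_bool (\<omega> \<in> E j) - p j))"
      using coh_full2[OF coh k1, of 1 "\<lambda>_. -1"] by blast
    have G': "0 \<le> of_bool (\<omega> \<in> ?E0) - z - (\<Sum>j=1..k. of_bool (\<omega> \<in> H j) * of_bool (\<omega> \<in> E j))
       + (\<Sum>j=1..k. of_bool (\<omega> \<in> H j) * p j)"
    proof -
      have "(\<Sum>j=1..k. (-1) * of_bool (\<omega> \<in> H j) * (of_bool (\<omega> \<in> E j) - p j))
         = (\<Sum>j=1..k. of_bool (\<omega> \<in> H j) * p j - of_bool (\<omega> \<in> H j) * of_bool (\<omega> \<in> E j))"
        by (rule sum.cong) (simp_all add: algebra_simps)
      also have "\<dots> = (\<Sum>j=1..k. of_bool (\<omega> \<in> H j) * p j) - (\<Sum>j=1..k. of_bool (\<omega> \<in> H j) * of_bool (\<omega> \<in> E j))"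
        by (rule sum_subtractf)
      finally show ?thesis using G by simp
    qed
    have a: "of_bool (\<omega> \<in> ?E0) \<le> (\<Sum>j=1..k. of_bool (\<omega> \<in> H j) * (of_bool (\<omega> \<in> E j)::real))"
    proof (cases "\<omega> \<in> ?E0")
      case True
      then obtain i where i: "i \<in> {1..k}" "\<omega> \<in> E i" "\<omega> \<in> H i" by blast
      have "(1::real) = of_bool (\<omega> \<in> H i) * of_bool (\<omega> \<in> E i)" using i by simp
      also have "\<dots> \<le> (\<Sum>j=1..k. of_bool (\<omega> \<in> H j) * (of_bool (\<omega> \<in> E j)::real))"
        by (rule member_le_sum) (use i in auto)
      finally show ?thesis using True by simp
    next
      case False
      then have "of_bool (\<omega> \<in> ?E0) = (0::real)" by simp
      moreover have "0 \<le> (\<Sum>j=1..k. of_bool (\<omega> \<in> H j) * (of_bool (\<omega> \<in> E j)::real))"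
        by (rule sum_nonneg) simp
      ultimately show ?thesis by linarith
    qed
    have b: "(\<Sum>j=1..k. of_bool (\<omega> \<in> H j) * p j) \<le> (\<Sum>j=1..k. p j)"
      by (rule sum_mono) (use pb in auto)
    show ?thesis using G' a b by linarith
  qed
  have zl: "T0H (map p [1..<k+1]) \<le> z"
  proof (cases "\<exists>i\<in>{1..k}. p i = 0")
    case True then show ?thesis using T0H_zero z0 by fastforce
  next
    case False
    then have pp: "\<forall>i\<in>{1..k}. 0 < p i \<and> p i \<le> 1" using pb by force
    define S where "S = (\<Sum>i=1..k. 1 / p i - 1)"
    have S0: "0 \<le> S" unfolding S_def using pp by (intro sum_nonneg) simp
    define l where "l = 1 / (1 + S)"
    have lT: "T0H (map p [1..<k+1]) = l" using T0H_pos[OF pp] unfolding l_def S_def by simp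
    have l1: "l * (1 + S) = 1" unfolding l_def using S0 by simp
    show ?thesis
    proof (rule ccontr)
      assume "\<not> ?thesis"
      then have zl: "z < l" using lT by simp
      define \<alpha> where "\<alpha> = (z + l) / 2"
      have a0: "0 < \<alpha>" "z < \<alpha>" "\<alpha> < l" using z0 zl unfolding \<alpha>_def by auto
      have "\<alpha> * (1 + S) < l * (1 + S)" using a0 S0 by (intro mult_strict_right_mono) auto
      then have aS: "\<alpha> + \<alpha> * S < 1" using l1 by (simp add: algebra_simps)
      obtain \<omega> where w: "\<omega> \<in> ?H0" and G: "0 \<le> (-1) * (of_bool (\<omega> \<in> ?E0) - z)
       + (\<Sum>j=1..k. \<alpha> / p j * of_bool (\<omega> \<in> H j) * (of_bool (\<omega> \<in> E j) - p j))"
        using coh_full2[OF coh k1, of "-1" "\<lambda>j. \<alpha> / p j"] by blast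
      have G': "0 \<le> z - of_bool (\<omega> \<in> ?E0)
       + (\<Sum>j=1..k. \<alpha> / p j * of_bool (\<omega> \<in> H j) * (of_bool (\<omega> \<in> E j) - p j))"
        using G by simp
      show False
      proof (cases "\<omega> \<in> ?E0")
        case True
        have "(\<Sum>j=1..k. \<alpha> / p j * of_bool (\<omega> \<in> H j) * (of_bool (\<omega> \<in> E j) - p j)) \<le> (\<Sum>j=1..k. \<alpha> * (1 / p j - 1))"
        proof (rule sum_mono)
          fix j assume j: "j \<in> {1..k}"
          have pj: "0 < p j" "p j \<le> 1" using pp j by auto
          have "of_bool (\<omega> \<in> H j) * (of_bool (\<omega> \<in> E j) - p j) \<le> 1 - p j"
            using pj by (cases "\<omega> \<in> H j"; cases "\<omega> \<in> E j") auto
          then have "\<alpha> / p j * (of_bool (\<omega> \<in> H j) * (of_bool (\<omega> \<in> E j) - p j)) \<le> \<alpha> / p j * (1 - p j)"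
            using a0 pj by (intro mult_left_mono) auto
          also have "\<dots> = \<alpha> * (1 / p j - 1)" using pj by (simp add: field_simps)
          finally show "\<alpha> / p j * of_bool (\<omega> \<in> H j) * (of_bool (\<omega> \<in> E j) - p j) \<le> \<alpha> * (1 / p j - 1)"
            by (simp add: mult.assoc)
        qed
        also have "\<dots> = \<alpha> * S" unfolding S_def by (simp add: sum_distrib_left)
        moreover have "of_bool (\<omega> \<in> ?E0) = (1::real)" using True by simp
        ultimately show False using G' aS a0 by linarith
      next
        case False
        obtain i where i: "i \<in> {1..k}" "\<omega> \<in> H i" using w by blast
        have t: "\<forall>j\<in>{1..k}. \<alpha> / p j * of_bool (\<omega> \<in> H j) * (of_bool (\<omega> \<in> E j) - p j) = - \<alpha> * of_bool (\<omega> \<in> H j)"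
        proof
          fix j assume j: "j \<in> {1..k}"
          have pj: "0 < p j" using pp j by auto
          have "\<omega> \<in> H j \<Longrightarrow> \<omega> \<notin> E j" using False j by blast
          then show "\<alpha> / p j * of_bool (\<omega> \<in> H j) * (of_bool (\<omega> \<in> E j) - p j) = - \<alpha> * of_bool (\<omega> \<in> H j)"
            using pj by (cases "\<omega> \<in> H j") auto
        qed
        have "(\<Sum>j=1..k. \<alpha> / p j * of_bool (\<omega> \<in> H j) * (of_bool (\<omega> \<in> E j) - p j)) = (\<Sum>j=1..k. - \<alpha> * of_bool (\<omega> \<in> H j))"
          using t by (intro sum.cong) auto
        also have "\<dots> \<le> - \<alpha> * of_bool (\<omega> \<in> H i)"
        proof -
          have "(\<Sum>j=1..k. - \<alpha> * of_bool (\<omega> \<in> H j)) = - \<alpha> * of_bool (\<omega> \<in> H i) + (\<Sum>j\<in>{1..k}-{i}. - \<alpha> * of_bool (\<omega> \<in> H j))"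
            using i by (simp add: sum.remove)
          moreover have "(\<Sum>j\<in>{1..k}-{i}. - \<alpha> * of_bool (\<omega> \<in> H j)) \<le> 0"
            using a0 by (intro sum_nonpos) simp
          ultimately show ?thesis by linarith
        qed
        finally have "(\<Sum>j=1..k. \<alpha> / p j * of_bool (\<omega> \<in> H j) * (of_bool (\<omega> \<in> E j) - p j)) \<le> - \<alpha>"
          using i by simp
        moreover have "of_bool (\<omega> \<in> ?E0) = (0::real)" using False by simp
        ultimately show False using G' a0 by linarith
      qed
    qed
  qed
  show ?thesis using zl zs z1 by simp
qed



lemma atom_eval:
  fixes E H :: "nat \<Rightarrow> 'a set" and p t :: "nat \<Rightarrow> real"
  assumes a: "\<forall>i\<in>{1..k}. (\<omega> \<in> E i \<longleftrightarrow> i \<in> A) \<and> (\<omega> \<in> H i \<longleftrightarrow> i \<in> B)"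
  shows "(\<omega> \<in> (\<Union>i\<in>{1..k}. H i)) = (\<exists>i\<in>{1..k}. i \<in> B)"
    and "(\<omega> \<in> (\<Union>i\<in>{1..k}. E i \<inter> H i)) = (\<exists>i\<in>{1..k}. i \<in> A \<and> i \<in> B)"
    and "(\<Sum>j=1..k. t j * of_bool (\<omega> \<in> H j) * (of_bool (\<omega> \<in> E j) - p j))
         = (\<Sum>j=1..k. t j * of_bool (j \<in> B) * (of_bool (j \<in> A) - p j))"
  using a by (auto intro!: sum.cong)

lemma sum_single:
  fixes t :: "nat \<Rightarrow> real"
  assumes "i \<in> {1..k}"
  shows "(\<Sum>j=1..k. t j * of_bool (j \<in> {i})) = t i"
proof -
  have "(\<Sum>j=1..k. t j * of_bool (j \<in> {i})) = t i * of_bool (i \<in> {i}) + (\<Sum>j\<in>{1..k}-{i}. t j * of_bool (j \<in> {i}))"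
    using assms by (simp add: sum.remove)
  also have "(\<Sum>j\<in>{1..k}-{i}. t j * of_bool (j \<in> {i})) = 0" by (rule sum.neutral) auto
  finally show ?thesis by simp
qed

lemma suff_core:
  fixes E H :: "nat \<Rightarrow> 'a set" and p t :: "nat \<Rightarrow> real" and n k :: nat
  assumes LI: "logically_independent (\<lambda>(i, b). if b then E i else H i) ({1..n} \<times> UNIV)"
    and pb: "\<forall>i\<in>{1..k}. 0 \<le> p i \<and> p i \<le> 1" and k1: "1 \<le> k" and kn: "k \<le> n"
    and zl: "T0H (map p [1..<k+1]) \<le> z" and zu: "z \<le> min (\<Sum>i=1..k. p i) 1"
  shows "\<exists>\<omega>\<in>(\<Union>i\<in>{1..k}. H i). 0 \<le> c * (of_bool (\<omega> \<in> (\<Union>i\<in>{1..k}. E i \<inter> H i)) - z)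
     + (\<Sum>j=1..k. t j * of_bool (\<omega> \<in> H j) * (of_bool (\<omega> \<in> E j) - p j))"
    (is "\<exists>\<omega>\<in>?H0. 0 \<le> ?G \<omega>")
proof -
  let ?E0 = "\<Union>i\<in>{1..k}. E i \<inter> H i"
  have z0: "0 \<le> z" using T0H_nonneg[OF pb] zl by linarith
  have z1: "z \<le> 1" and zs: "z \<le> (\<Sum>i=1..k. p i)" using zu by auto
  have k1': "1 \<in> {1..k}" using k1 by simp
  show ?thesis
  proof (cases "0 \<le> c")
    case c0: True
    define P where "P = {j\<in>{1..k}. 0 < t j}"
    show ?thesis
    proof (cases "P = {}")
      case False
      then obtain j0 where j0: "j0 \<in> P" by blast
      obtain \<omega> where w: "\<forall>i\<in>{1..k}. (\<omega> \<in> E i \<longleftrightarrow> i \<in> P) \<and> (\<omega> \<in> H i \<longleftrightarrow> i \<in> {1..k})"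
        using atom[OF LI kn] by blast
      note ev = atom_eval[OF w]
      have inH: "\<omega> \<in> ?H0" using ev(1) k1' by blast
      have inE: "\<omega> \<in> ?E0" using ev(2) j0 unfolding P_def by blast
      have "0 \<le> (\<Sum>j=1..k. t j * of_bool (j \<in> {1..k}) * (of_bool (j \<in> P) - p j))"
      proof (rule sum_nonneg)
        fix j assume j: "j \<in> {1..k}"
        show "0 \<le> t j * of_bool (j \<in> {1..k}) * (of_bool (j \<in> P) - p j)"
        proof (cases "j \<in> P")
          case True then have "0 < t j" unfolding P_def by auto
          then show ?thesis using True j pb by simp
        next
          case False then have "t j \<le> 0" using j unfolding P_def by auto
          moreover have "0 \<le> p j" using j pb by auto
          ultimately show ?thesis using False by (simp add: mult_nonpos_nonneg)
        qed
      qed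
      moreover have "0 \<le> c * (1 - z)" using c0 z1 by simp
      ultimately have "0 \<le> ?G \<omega>" using inE unfolding ev(3) by simp
      then show ?thesis using inH by blast
    next
      case Pe: True
      then have tneg: "\<forall>j\<in>{1..k}. t j \<le> 0" unfolding P_def by force
      show ?thesis
      proof (rule ccontr)
        assume neg: "\<not> ?thesis"
        have negG: "?G \<omega> < 0" if "\<omega> \<in> ?H0" for \<omega> using neg that by (meson not_le)
        define X where "X = - (\<Sum>j=1..k. p j * t j)"
        have "(\<Sum>j=1..k. p j * t j) \<le> 0"
        proof (rule sum_nonpos)
          fix j assume j: "j \<in> {1..k}"
          then have "0 \<le> p j" "t j \<le> 0" using tneg pb by auto
          then show "p j * t j \<le> 0" by (simp add: mult_nonneg_nonpos)
        qed
        then have X0: "0 \<le> X" unfolding X_def by simp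
        have h0: "- (c * z) + X < 0"
        proof -
          obtain \<omega> where w: "\<forall>i\<in>{1..k}. (\<omega> \<in> E i \<longleftrightarrow> i \<in> {}) \<and> (\<omega> \<in> H i \<longleftrightarrow> i \<in> {1..k})"
            using atom[OF LI kn] by blast
          note ev = atom_eval[OF w]
          have inH: "\<omega> \<in> ?H0" using ev(1) k1' by blast
          have Gl: "?G \<omega> < 0" using negG[OF inH] .
          have e: "of_bool (\<omega> \<in> ?E0) = (0::real)"
        proof -
          have "\<omega> \<notin> ?E0" using ev(2) by blast
          then show ?thesis by (simp only: of_bool_eq)
        qed
          have sm: "(\<Sum>j=1..k. t j * of_bool (j \<in> {1..k}) * (of_bool (j \<in> ({}::nat set)) - p j)) = X"
            unfolding X_def by (simp add: sum_negf[symmetric] mult.commute)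
          show ?thesis using Gl[unfolded ev(3) e sm] by simp
        qed
        have hi: "c * (1 - z) + t i + X < 0" if i: "i \<in> {1..k}" for i
        proof -
          obtain \<omega> where w: "\<forall>i'\<in>{1..k}. (\<omega> \<in> E i' \<longleftrightarrow> i' \<in> {i}) \<and> (\<omega> \<in> H i' \<longleftrightarrow> i' \<in> {1..k})"
            using atom[OF LI kn] by blast
          note ev = atom_eval[OF w]
          have inH: "\<omega> \<in> ?H0" using ev(1) k1' by blast
          have Gl: "?G \<omega> < 0" using negG[OF inH] .
          have e: "of_bool (\<omega> \<in> ?E0) = (1::real)"
        proof -
          have "\<omega> \<in> ?E0" using ev(2) i by blast
          then show ?thesis by (simp only: of_bool_eq)
        qed
          have sm: "(\<Sum>j=1..k. t j * of_bool (j \<in> {1..k}) * (of_bool (j \<in> {i}) - p j)) = t i + X"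
          proof -
            have "(\<Sum>j=1..k. t j * of_bool (j \<in> {1..k}) * (of_bool (j \<in> {i}) - p j))
               = (\<Sum>j=1..k. t j * of_bool (j \<in> {i}) - p j * t j)"
              by (rule sum.cong) (auto simp: algebra_simps)
            also have "\<dots> = (\<Sum>j=1..k. t j * of_bool (j \<in> {i})) - (\<Sum>j=1..k. p j * t j)"
              by (rule sum_subtractf)
            finally show ?thesis using sum_single[OF i, of t] unfolding X_def by simp
          qed
          show ?thesis using Gl[unfolded ev(3) e sm] by simp
        qed
        define \<sigma> where "\<sigma> = (\<Sum>i=1..k. p i)"
        show False
        proof (cases "\<sigma> = 0")
          case True
          then have "z \<le> 0" using zs unfolding \<sigma>_def by simp
          then have "c * z \<le> 0" using c0 by (simp add: mult_nonneg_nonpos)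
          then show False using h0 X0 by linarith
        next
          case False
          have "\<exists>i\<in>{1..k}. p i \<noteq> 0"
          proof (rule ccontr)
            assume "\<not> (\<exists>i\<in>{1..k}. p i \<noteq> 0)"
            then have "\<sigma> = 0" unfolding \<sigma>_def by (intro sum.neutral) auto
            then show False using False by simp
          qed
          then obtain i0 where i0': "i0 \<in> {1..k}" "p i0 \<noteq> 0" by blast
          then have i0: "i0 \<in> {1..k}" "0 < p i0" using pb by (auto simp: less_le)
          define Y where "Y = c * (1 - z) + X"
          have "0 < (\<Sum>i=1..k. p i * (- (Y + t i)))"
          proof (rule sum_pos2[OF _ i0(1)])
            have "Y + t i0 < 0" using hi[OF i0(1)] unfolding Y_def by simp
            then show "0 < p i0 * - (Y + t i0)" using i0(2) by (intro mult_pos_pos) auto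
            show "0 \<le> p i * - (Y + t i)" if i: "i \<in> {1..k}" for i
            proof -
              have "Y + t i < 0" using hi[OF i] unfolding Y_def by simp
              moreover have "0 \<le> p i" using pb i by auto
              ultimately show ?thesis by (intro mult_nonneg_nonneg) auto
            qed
          qed simp
          also have "(\<Sum>i=1..k. p i * (- (Y + t i))) = - (\<sigma> * Y) + X"
          proof -
            have "(\<Sum>i=1..k. p i * (- (Y + t i))) = (\<Sum>i=1..k. - (Y * p i) - p i * t i)"
              by (rule sum.cong) (simp_all add: algebra_simps)
            also have "\<dots> = (\<Sum>i=1..k. - (Y * p i)) - (\<Sum>i=1..k. p i * t i)" by (rule sum_subtractf)
            also have "(\<Sum>i=1..k. - (Y * p i)) = - (Y * \<sigma>)" unfolding \<sigma>_def by (simp add: sum_negf sum_distrib_left)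
            finally show ?thesis unfolding X_def by (simp add: mult.commute)
          qed
          finally have main: "\<sigma> * Y < X" by simp
          have Y0: "X \<le> Y" unfolding Y_def using c0 z1 by simp
          show False
          proof (cases "1 \<le> \<sigma>")
            case True
            have "1 * Y \<le> \<sigma> * Y" using True Y0 X0 by (intro mult_right_mono) auto
            then show False using main Y0 by simp
          next
            case False
            have s1: "0 < 1 - \<sigma>" using False by simp
            have "(1 - \<sigma>) * X < (1 - \<sigma>) * (c * z)" using h0 s1 by (intro mult_strict_left_mono) auto
            moreover have "0 \<le> c * (\<sigma> - z)" using c0 zs unfolding \<sigma>_def by simp
            moreover have "\<sigma> * Y = \<sigma> * c - \<sigma> * (c * z) + \<sigma> * X" unfolding Y_def by (simp add: algebra_simps)
            moreover have "(1 - \<sigma>) * X = X - \<sigma> * X" by (simp add: algebra_simps)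
            moreover have "(1 - \<sigma>) * (c * z) = c * z - \<sigma> * (c * z)" by (simp add: algebra_simps)
            moreover have "c * (\<sigma> - z) = \<sigma> * c - c * z" by (simp add: algebra_simps)
            ultimately show False using main by linarith
          qed
        qed
      qed
    qed
  next
    case cn: False
    show ?thesis
    proof (rule ccontr)
      assume neg: "\<not> ?thesis"
      have negG: "?G \<omega> < 0" if "\<omega> \<in> ?H0" for \<omega> using neg that by (meson not_le)
      have hF: "c * (1 - z) + (\<Sum>j=1..k. t j * (1 - p j)) < 0"
      proof -
        obtain \<omega> where w: "\<forall>i\<in>{1..k}. (\<omega> \<in> E i \<longleftrightarrow> i \<in> {1..k}) \<and> (\<omega> \<in> H i \<longleftrightarrow> i \<in> {1..k})"
          using atom[OF LI kn] by blast
        note ev = atom_eval[OF w]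
        have inH: "\<omega> \<in> ?H0" using ev(1) k1' by blast
        have Gl: "?G \<omega> < 0" using negG[OF inH] .
        have e: "of_bool (\<omega> \<in> ?E0) = (1::real)"
        proof -
          have "\<omega> \<in> ?E0" using ev(2) k1' by blast
          then show ?thesis by (simp only: of_bool_eq)
        qed
        have sm: "(\<Sum>j=1..k. t j * of_bool (j \<in> {1..k}) * (of_bool (j \<in> {1..k}) - p j)) = (\<Sum>j=1..k. t j * (1 - p j))"
          by (rule sum.cong) auto
        show ?thesis using Gl[unfolded ev(3) e sm] by simp
      qed
      have hi: "- (c * z) - t i * p i < 0" if i: "i \<in> {1..k}" for i
      proof -
        obtain \<omega> where w: "\<forall>i'\<in>{1..k}. (\<omega> \<in> E i' \<longleftrightarrow> i' \<in> {}) \<and> (\<omega> \<in> H i' \<longleftrightarrow> i' \<in> {i})"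
          using atom[OF LI kn] by blast
        note ev = atom_eval[OF w]
        have inH: "\<omega> \<in> ?H0" using ev(1) i by blast
        have Gl: "?G \<omega> < 0" using negG[OF inH] .
        have e: "of_bool (\<omega> \<in> ?E0) = (0::real)"
        proof -
          have "\<omega> \<notin> ?E0" using ev(2) by blast
          then show ?thesis by (simp only: of_bool_eq)
        qed
        have sm: "(\<Sum>j=1..k. t j * of_bool (j \<in> {i}) * (of_bool (j \<in> ({}::nat set)) - p j)) = - (t i * p i)"
        proof -
          have "(\<Sum>j=1..k. t j * of_bool (j \<in> {i}) * (of_bool (j \<in> ({}::nat set)) - p j))
              = (\<Sum>j=1..k. (- (t j * p j)) * of_bool (j \<in> {i}))"
            by (rule sum.cong) (auto simp: algebra_simps)
          also have "\<dots> = - (t i * p i)" by (rule sum_single[OF i])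
          finally show ?thesis .
        qed
        show ?thesis using Gl[unfolded ev(3) e sm] by simp
      qed
      show False
      proof (cases "\<exists>i\<in>{1..k}. p i = 0")
        case True
        then obtain i where "i \<in> {1..k}" "p i = 0" by blast
        then have "0 < c * z" using hi by force
        moreover have "c * z \<le> 0" using cn z0 by (simp add: mult_nonpos_nonneg)
        ultimately show False by simp
      next
        case False
        then have pp: "\<forall>i\<in>{1..k}. 0 < p i \<and> p i \<le> 1" using pb by force
        define S where "S = (\<Sum>i=1..k. 1 / p i - 1)"
        have S0: "0 \<le> S" unfolding S_def using pp by (intro sum_nonneg) simp
        have lT: "T0H (map p [1..<k+1]) = 1 / (1 + S)" using T0H_pos[OF pp] unfolding S_def by simp
        have "1 / (1 + S) * (1 + S) \<le> z * (1 + S)" using zl lT S0 by (intro mult_right_mono) auto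
        then have zS: "1 \<le> z * (1 + S)" using S0 by simp
        define d where "d = - c"
        have d0: "0 < d" using cn unfolding d_def by simp
        have "(\<Sum>i=1..k. d * z * (1 / p i - 1)) \<le> (\<Sum>j=1..k. t j * (1 - p j))"
        proof (rule sum_mono)
          fix i assume i: "i \<in> {1..k}"
          have pi: "0 < p i" "p i \<le> 1" using pp i by auto
          have "d * z < t i * p i" using hi[OF i] unfolding d_def by simp
          then have "d * z / p i < t i" using pi by (simp add: divide_less_eq)
          then have "d * z / p i * (1 - p i) \<le> t i * (1 - p i)" using pi by (intro mult_right_mono) auto
          moreover have "d * z / p i * (1 - p i) = d * z * (1 / p i - 1)" using pi by (simp add: field_simps)
          ultimately show "d * z * (1 / p i - 1) \<le> t i * (1 - p i)" by simp
        qed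
        moreover have "(\<Sum>i=1..k. d * z * (1 / p i - 1)) = d * z * S" unfolding S_def by (simp add: sum_distrib_left)
        moreover have "0 \<le> d * (z * (1 + S) - 1)" using d0 zS by simp
        moreover have "c * (1 - z) + d * z * S = d * (z * (1 + S) - 1)" unfolding d_def by (simp add: algebra_simps)
        ultimately show False using hF by linarith
      qed
    qed
  qed
qed



lemma suff:
  fixes E H :: "nat \<Rightarrow> 'a set" and p :: "nat \<Rightarrow> real" and n k :: nat
  assumes LI: "logically_independent (\<lambda>(i, b). if b then E i else H i) ({1..n} \<times> UNIV)"
    and pb: "\<forall>i\<in>{1..k}. 0 \<le> p i \<and> p i \<le> 1" and k1: "1 \<le> k" and kn: "k \<le> n"
    and zl: "T0H (map p [1..<k+1]) \<le> z" and zu: "z \<le> min (\<Sum>i=1..k. p i) 1"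
  shows "coherent (qdE E H k) (qdH H k) (qdP p z) {0..k}"
  unfolding coherent_def
proof (intro allI impI)
  fix J :: "nat set" and s :: "nat \<Rightarrow> real"
  assume J: "J \<subseteq> {0..k}" "J \<noteq> {}" "finite J"
  let ?F = "\<lambda>\<omega> j. of_bool (\<omega> \<in> qdH H k j) * (of_bool (\<omega> \<in> qdE E H k j) - qdP p z j)"
  show "\<exists>\<omega>\<in>(\<Union>j\<in>J. qdH H k j). (\<Sum>j\<in>J. s j * of_bool (\<omega> \<in> qdH H k j) * (of_bool (\<omega> \<in> qdE E H k j) - qdP p z j)) \<ge> 0"
  proof (cases "0 \<in> J")
    case True
    define s' where "s' = (\<lambda>j. if j \<in> J then s j else 0)"
    obtain \<omega> where w: "\<omega> \<in> (\<Union>i\<in>{1..k}. H i)"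
      and G: "0 \<le> s 0 * (of_bool (\<omega> \<in> (\<Union>i\<in>{1..k}. E i \<inter> H i)) - z)
     + (\<Sum>j=1..k. s' j * of_bool (\<omega> \<in> H j) * (of_bool (\<omega> \<in> E j) - p j))"
      using suff_core[OF LI pb k1 kn zl zu, of "s 0" s'] by blast
    have "(\<Sum>j\<in>{0..k}. s' j * of_bool (\<omega> \<in> qdH H k j) * (of_bool (\<omega> \<in> qdE E H k j) - qdP p z j))
        = (\<Sum>j\<in>{0..k}. if j \<in> J then s j * of_bool (\<omega> \<in> qdH H k j) * (of_bool (\<omega> \<in> qdE E H k j) - qdP p z j) else 0)"
      unfolding s'_def by (rule sum.cong) auto
    also have "\<dots> = (\<Sum>j\<in>{0..k} \<inter> J. s j * of_bool (\<omega> \<in> qdH H k j) * (of_bool (\<omega> \<in> qdE E H k j) - qdP p z j))"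
      by (rule sum.inter_restrict[symmetric]) simp
    also have "{0..k} \<inter> J = J" using J by blast
    finally have eq: "(\<Sum>j\<in>J. s j * of_bool (\<omega> \<in> qdH H k j) * (of_bool (\<omega> \<in> qdE E H k j) - qdP p z j))
        = (\<Sum>j\<in>{0..k}. s' j * of_bool (\<omega> \<in> qdH H k j) * (of_bool (\<omega> \<in> qdE E H k j) - qdP p z j))" by simp
    have e1: "of_bool (\<omega> \<in> (\<Union>i\<in>{1..k}. H i)) = (1::real)" using w by (simp only: of_bool_eq)
    have s0: "s' 0 = s 0" using True unfolding s'_def by simp
    have "0 \<le> (\<Sum>j\<in>J. s j * of_bool (\<omega> \<in> qdH H k j) * (of_bool (\<omega> \<in> qdE E H k j) - qdP p z j))"
      unfolding eq G_split e1 s0 using G by simp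
    moreover have "\<omega> \<in> (\<Union>j\<in>J. qdH H k j)"
    proof -
      have "\<omega> \<in> qdH H k 0" using w by (simp add: qdH_def)
      then show ?thesis using True by (rule_tac UN_I[of 0]) auto
    qed
    ultimately show ?thesis by auto
  next
    case False
    have J1: "J \<subseteq> {1..k}"
    proof
      fix x assume x: "x \<in> J"
      have "x \<noteq> 0"
      proof
        assume "x = 0"
        then show HOL.False using \<open>0 \<notin> J\<close> x by simp
      qed
      moreover have "x \<le> k" using J(1) x by auto
      ultimately show "x \<in> {1..k}" by simp
    qed
    obtain j0 where j0: "j0 \<in> J" using J(2) by blast
    obtain \<omega> where w: "\<forall>i\<in>{1..k}. (\<omega> \<in> E i \<longleftrightarrow> i \<in> {j. 0 \<le> s j}) \<and> (\<omega> \<in> H i \<longleftrightarrow> i \<in> {1..k})"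
      using atom[OF LI kn] by blast
    have "\<omega> \<in> qdH H k j0" using w j0 J1 False by (auto simp: qdH_def)
    then have inU: "\<omega> \<in> (\<Union>j\<in>J. qdH H k j)" using j0 by (rule_tac UN_I[of j0]) auto
    have "0 \<le> (\<Sum>j\<in>J. s j * of_bool (\<omega> \<in> qdH H k j) * (of_bool (\<omega> \<in> qdE E H k j) - qdP p z j))"
    proof (rule sum_nonneg)
      fix j assume j: "j \<in> J"
      then have j1: "j \<in> {1..k}" "j \<noteq> 0" using J1 False by auto
      have pj: "0 \<le> p j" "p j \<le> 1" using pb j1 by auto
      have "s j * of_bool (\<omega> \<in> qdH H k j) * (of_bool (\<omega> \<in> qdE E H k j) - qdP p z j)
          = s j * (of_bool (0 \<le> s j) - p j)"
        using w j1 by (simp add: qdH_def qdE_def qdP_def)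
      also have "0 \<le> \<dots>"
      proof (cases "0 \<le> s j")
        case True then show ?thesis using pj by simp
      next
        case False
        then have "s j \<le> 0" by simp
        then have "s j * p j \<le> 0" using pj by (simp add: mult_nonpos_nonneg)
        then show ?thesis using False by simp
      qed
      finally show "0 \<le> s j * of_bool (\<omega> \<in> qdH H k j) * (of_bool (\<omega> \<in> qdE E H k j) - qdP p z j)" .
    qed
    then show ?thesis using inU by auto
  qed
qed

theorem theorem8:
  fixes E H :: "nat \<Rightarrow> 'a set" and p :: "nat \<Rightarrow> real" and n k :: nat
  assumes "logically_independent (\<lambda>(i, b). if b then E i else H i) ({1..n} \<times> UNIV)"
    and "\<forall>i\<in>{1..n}. p i \<in> {0..1}"
    and "2 \<le> k" and "k \<le> n"
  shows "{z. coherent (qdE E H k) (qdH H k) (qdP p z) {0..k}}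
         = {T0H (map p [1..<k+1]) .. min (\<Sum>i=1..k. p i) 1}"
proof -
  have pb: "\<forall>i\<in>{1..k}. 0 \<le> p i \<and> p i \<le> 1" using assms(2) assms(4) by auto
  have k1: "1 \<le> k" using assms(3) by simp
  show ?thesis
  proof (rule set_eqI, rule iffI)
    fix z assume "z \<in> {z. coherent (qdE E H k) (qdH H k) (qdP p z) {0..k}}"
    then have "coherent (qdE E H k) (qdH H k) (qdP p z) {0..k}" by simp
    from nec[OF this pb k1] show "z \<in> {T0H (map p [1..<k+1]) .. min (\<Sum>i=1..k. p i) 1}" by simp
  next
    fix z assume "z \<in> {T0H (map p [1..<k+1]) .. min (\<Sum>i=1..k. p i) 1}"
    then have "T0H (map p [1..<k+1]) \<le> z" "z \<le> min (\<Sum>i=1..k. p i) 1" by auto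
    from suff[OF assms(1) pb k1 assms(4) this] show "z \<in> {z. coherent (qdE E H k) (qdH H k) (qdP p z) {0..k}}" by simp
  qed
qed


end
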